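(* Let $a\in C\ell_{1,2}$. Then there is a unique $x\in C\ell_{1,2}$ satisfying $axa=a$, $xax=x$, $(ax)'=ax$ and $(xa)'=xa$.
   Context: $C\ell_{1,2}$ is the real Clifford algebra generated by $i_1,i_2,i_3$ with $i_1^2=1$, $i_2^2=i_3^2=-1$ and $i_ti_m=-i_mi_t$ for $t\neq m$, with real basis $e_0=1$, $e_1=i_1$, $e_2=i_2$, $e_3=i_1i_2$, $e_4=i_3$, $e_5=i_1i_3$, $e_6=i_2i_3$, $e_7=i_1i_2i_3$. For $a=\sum_{t=0}^7 a_te_t$ the prime is $a'=a_0+a_1e_1-a_2e_2+a_3e_3-a_4e_4+a_5e_5-a_6e_6-a_7e_7$. *)

theory Defs
  imports Complex_Main
begin

text \<open>An element is a coefficient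
  function on the basis indices 0..7 (zero outside); basis index t encodes the
  monomial whose generators are given by the binary digits of t:
  bit 0 = i1, bit 1 = i2, bit 2 = i3 (generators in increasing order).
  So e0=1, e1=i1, e2=i2, e3=i1i2, e4=i3, e5=i1i3, e6=i2i3, e7=i1i2i3.\<close>

definition cl12 :: "(nat \<Rightarrow> real) set" where
  "cl12 = {a. \<forall>n\<ge>8. a n = 0}"

definition inb :: "nat \<Rightarrow> nat \<Rightarrow> bool" where
  "inb t j = odd (t div 2 ^ j)"

definition gsq :: "nat \<Rightarrow> real" where
  "gsq j = (if j = 0 then 1 else -1)"

text \<open>index of the monomial obtained as symmetric difference\<close>
definition bxor :: "nat \<Rightarrow> nat \<Rightarrow> nat" where
  "bxor s t = (\<Sum>j<3. if inb s j \<noteq> inb t j then 2 ^ j else 0)"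

text \<open>sign in e_s e_t = bsign s t * e_(bxor s t), from anticommutation and squares\<close>
definition bsign :: "nat \<Rightarrow> nat \<Rightarrow> real" where
  "bsign s t = (-1) ^ card {(j, k). j < 3 \<and> k < 3 \<and> inb s j \<and> inb t k \<and> k < j}
     * (\<Prod>j\<in>{j. j < 3 \<and> inb s j \<and> inb t j}. gsq j)"

definition clmul :: "(nat \<Rightarrow> real) \<Rightarrow> (nat \<Rightarrow> real) \<Rightarrow> (nat \<Rightarrow> real)" (infixl "\<star>" 70) where
  "clmul a b = (\<lambda>r. if r < 8 then
      (\<Sum>s<8. \<Sum>t<8. if bxor s t = r then bsign s t * a s * b t else 0) else 0)"

definition clprime :: "(nat \<Rightarrow> real) \<Rightarrow> (nat \<Rightarrow> real)" where
  "clprime a = (\<lambda>t. (if t \<in> {2, 4, 6, 7} then -1 else 1) * a t)"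

end

theory Submission imports Defs begin

lemma bsign_code: "bsign s t = (-1) ^ (\<Sum>j<3. \<Sum>k<3. if inb s j \<and> inb t k \<and> k < j then 1 else 0)
     * (\<Prod>j<3. if inb s j \<and> inb t j then gsq j else 1)"
proof -
  have "{(j, k). j < (3::nat) \<and> k < 3 \<and> inb s j \<and> inb t k \<and> k < j} = {p \<in> {..<3} \<times> {..<3}. inb s (fst p) \<and> inb t (snd p) \<and> snd p < fst p}"
    by auto
  hence c: "card {(j, k). j < (3::nat) \<and> k < 3 \<and> inb s j \<and> inb t k \<and> k < j} = (\<Sum>j<3. \<Sum>k<3. if inb s j \<and> inb t k \<and> k < j then 1 else 0)"
    apply (simp only: card_eq_sum)
    apply (subst sum.inter_filter, simp)
    apply (subst sum.cartesian_product)
    apply (simp add: case_prod_beta)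
    done
  have p: "(\<Prod>j\<in>{j. j < 3 \<and> inb s j \<and> inb t j}. gsq j) = (\<Prod>j<3. if inb s j \<and> inb t j then gsq j else 1)"
    by (simp add: prod.If_cases Int_def conj_commute)
  show ?thesis unfolding bsign_def c p ..
qed

lemma sum3: "(\<Sum>j<(3::nat). f j) = f 0 + f 1 + (f 2::nat)" by (simp add: lessThan_nat_numeral)
lemma prod3: "(\<Prod>j<(3::nat). f j) = f 0 * f 1 * (f 2::real)" by (simp add: lessThan_nat_numeral)
lemma gsqs: "gsq 0 = 1" "gsq 1 = -1" "gsq 2 = -1" by (simp_all add: gsq_def)
lemma inb0_0: "inb 0 0 = False" by (simp add: inb_def)
lemma inb0_1: "inb 0 1 = False" by (simp add: inb_def)
lemma inb0_2: "inb 0 2 = False" by (simp add: inb_def)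
lemma inb1_0: "inb 1 0 = True" by (simp add: inb_def)
lemma inb1_1: "inb 1 1 = False" by (simp add: inb_def)
lemma inb1_2: "inb 1 2 = False" by (simp add: inb_def)
lemma inb2_0: "inb 2 0 = False" by (simp add: inb_def)
lemma inb2_1: "inb 2 1 = True" by (simp add: inb_def)
lemma inb2_2: "inb 2 2 = False" by (simp add: inb_def)
lemma inb3_0: "inb 3 0 = True" by (simp add: inb_def)
lemma inb3_1: "inb 3 1 = True" by (simp add: inb_def)
lemma inb3_2: "inb 3 2 = False" by (simp add: inb_def)
lemma inb4_0: "inb 4 0 = False" by (simp add: inb_def)
lemma inb4_1: "inb 4 1 = False" by (simp add: inb_def)
lemma inb4_2: "inb 4 2 = True" by (simp add: inb_def)
lemma inb5_0: "inb 5 0 = True" by (simp add: inb_def)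
lemma inb5_1: "inb 5 1 = False" by (simp add: inb_def)
lemma inb5_2: "inb 5 2 = True" by (simp add: inb_def)
lemma inb6_0: "inb 6 0 = False" by (simp add: inb_def)
lemma inb6_1: "inb 6 1 = True" by (simp add: inb_def)
lemma inb6_2: "inb 6 2 = True" by (simp add: inb_def)
lemma inb7_0: "inb 7 0 = True" by (simp add: inb_def)
lemma inb7_1: "inb 7 1 = True" by (simp add: inb_def)
lemma inb7_2: "inb 7 2 = True" by (simp add: inb_def)
lemmas inbs = inb0_0 inb0_1 inb0_2 inb1_0 inb1_1 inb1_2 inb2_0 inb2_1 inb2_2 inb3_0 inb3_1 inb3_2 inb4_0 inb4_1 inb4_2 inb5_0 inb5_1 inb5_2 inb6_0 inb6_1 inb6_2 inb7_0 inb7_1 inb7_2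
lemma bs0_0: "bsign 0 0 = 1" unfolding bsign_code sum3 prod3 inbs gsqs by simp
lemma bx0_0: "bxor 0 0 = 0" unfolding bxor_def sum3 inbs by simp
lemma bs0_1: "bsign 0 1 = 1" unfolding bsign_code sum3 prod3 inbs gsqs by simp
lemma bx0_1: "bxor 0 1 = 1" unfolding bxor_def sum3 inbs by simp
lemma bs0_2: "bsign 0 2 = 1" unfolding bsign_code sum3 prod3 inbs gsqs by simp
lemma bx0_2: "bxor 0 2 = 2" unfolding bxor_def sum3 inbs by simp
lemma bs0_3: "bsign 0 3 = 1" unfolding bsign_code sum3 prod3 inbs gsqs by simp
lemma bx0_3: "bxor 0 3 = 3" unfolding bxor_def sum3 inbs by simp
lemma bs0_4: "bsign 0 4 = 1" unfolding bsign_code sum3 prod3 inbs gsqs by simp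
lemma bx0_4: "bxor 0 4 = 4" unfolding bxor_def sum3 inbs by simp
lemma bs0_5: "bsign 0 5 = 1" unfolding bsign_code sum3 prod3 inbs gsqs by simp
lemma bx0_5: "bxor 0 5 = 5" unfolding bxor_def sum3 inbs by simp
lemma bs0_6: "bsign 0 6 = 1" unfolding bsign_code sum3 prod3 inbs gsqs by simp
lemma bx0_6: "bxor 0 6 = 6" unfolding bxor_def sum3 inbs by simp
lemma bs0_7: "bsign 0 7 = 1" unfolding bsign_code sum3 prod3 inbs gsqs by simp
lemma bx0_7: "bxor 0 7 = 7" unfolding bxor_def sum3 inbs by simp
lemma bs1_0: "bsign 1 0 = 1" unfolding bsign_code sum3 prod3 inbs gsqs by simp
lemma bx1_0: "bxor 1 0 = 1" unfolding bxor_def sum3 inbs by simp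
lemma bs1_1: "bsign 1 1 = 1" unfolding bsign_code sum3 prod3 inbs gsqs by simp
lemma bx1_1: "bxor 1 1 = 0" unfolding bxor_def sum3 inbs by simp
lemma bs1_2: "bsign 1 2 = 1" unfolding bsign_code sum3 prod3 inbs gsqs by simp
lemma bx1_2: "bxor 1 2 = 3" unfolding bxor_def sum3 inbs by simp
lemma bs1_3: "bsign 1 3 = 1" unfolding bsign_code sum3 prod3 inbs gsqs by simp
lemma bx1_3: "bxor 1 3 = 2" unfolding bxor_def sum3 inbs by simp
lemma bs1_4: "bsign 1 4 = 1" unfolding bsign_code sum3 prod3 inbs gsqs by simp
lemma bx1_4: "bxor 1 4 = 5" unfolding bxor_def sum3 inbs by simp
lemma bs1_5: "bsign 1 5 = 1" unfolding bsign_code sum3 prod3 inbs gsqs by simp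
lemma bx1_5: "bxor 1 5 = 4" unfolding bxor_def sum3 inbs by simp
lemma bs1_6: "bsign 1 6 = 1" unfolding bsign_code sum3 prod3 inbs gsqs by simp
lemma bx1_6: "bxor 1 6 = 7" unfolding bxor_def sum3 inbs by simp
lemma bs1_7: "bsign 1 7 = 1" unfolding bsign_code sum3 prod3 inbs gsqs by simp
lemma bx1_7: "bxor 1 7 = 6" unfolding bxor_def sum3 inbs by simp
lemma bs2_0: "bsign 2 0 = 1" unfolding bsign_code sum3 prod3 inbs gsqs by simp
lemma bx2_0: "bxor 2 0 = 2" unfolding bxor_def sum3 inbs by simp
lemma bs2_1: "bsign 2 1 = -1" unfolding bsign_code sum3 prod3 inbs gsqs by simp
lemma bx2_1: "bxor 2 1 = 3" unfolding bxor_def sum3 inbs by simp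
lemma bs2_2: "bsign 2 2 = -1" unfolding bsign_code sum3 prod3 inbs gsqs by simp
lemma bx2_2: "bxor 2 2 = 0" unfolding bxor_def sum3 inbs by simp
lemma bs2_3: "bsign 2 3 = 1" unfolding bsign_code sum3 prod3 inbs gsqs by simp
lemma bx2_3: "bxor 2 3 = 1" unfolding bxor_def sum3 inbs by simp
lemma bs2_4: "bsign 2 4 = 1" unfolding bsign_code sum3 prod3 inbs gsqs by simp
lemma bx2_4: "bxor 2 4 = 6" unfolding bxor_def sum3 inbs by simp
lemma bs2_5: "bsign 2 5 = -1" unfolding bsign_code sum3 prod3 inbs gsqs by simp
lemma bx2_5: "bxor 2 5 = 7" unfolding bxor_def sum3 inbs by simp
lemma bs2_6: "bsign 2 6 = -1" unfolding bsign_code sum3 prod3 inbs gsqs by simp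
lemma bx2_6: "bxor 2 6 = 4" unfolding bxor_def sum3 inbs by simp
lemma bs2_7: "bsign 2 7 = 1" unfolding bsign_code sum3 prod3 inbs gsqs by simp
lemma bx2_7: "bxor 2 7 = 5" unfolding bxor_def sum3 inbs by simp
lemma bs3_0: "bsign 3 0 = 1" unfolding bsign_code sum3 prod3 inbs gsqs by simp
lemma bx3_0: "bxor 3 0 = 3" unfolding bxor_def sum3 inbs by simp
lemma bs3_1: "bsign 3 1 = -1" unfolding bsign_code sum3 prod3 inbs gsqs by simp
lemma bx3_1: "bxor 3 1 = 2" unfolding bxor_def sum3 inbs by simp
lemma bs3_2: "bsign 3 2 = -1" unfolding bsign_code sum3 prod3 inbs gsqs by simp
lemma bx3_2: "bxor 3 2 = 1" unfolding bxor_def sum3 inbs by simp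
lemma bs3_3: "bsign 3 3 = 1" unfolding bsign_code sum3 prod3 inbs gsqs by simp
lemma bx3_3: "bxor 3 3 = 0" unfolding bxor_def sum3 inbs by simp
lemma bs3_4: "bsign 3 4 = 1" unfolding bsign_code sum3 prod3 inbs gsqs by simp
lemma bx3_4: "bxor 3 4 = 7" unfolding bxor_def sum3 inbs by simp
lemma bs3_5: "bsign 3 5 = -1" unfolding bsign_code sum3 prod3 inbs gsqs by simp
lemma bx3_5: "bxor 3 5 = 6" unfolding bxor_def sum3 inbs by simp
lemma bs3_6: "bsign 3 6 = -1" unfolding bsign_code sum3 prod3 inbs gsqs by simp
lemma bx3_6: "bxor 3 6 = 5" unfolding bxor_def sum3 inbs by simp
lemma bs3_7: "bsign 3 7 = 1" unfolding bsign_code sum3 prod3 inbs gsqs by simp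
lemma bx3_7: "bxor 3 7 = 4" unfolding bxor_def sum3 inbs by simp
lemma bs4_0: "bsign 4 0 = 1" unfolding bsign_code sum3 prod3 inbs gsqs by simp
lemma bx4_0: "bxor 4 0 = 4" unfolding bxor_def sum3 inbs by simp
lemma bs4_1: "bsign 4 1 = -1" unfolding bsign_code sum3 prod3 inbs gsqs by simp
lemma bx4_1: "bxor 4 1 = 5" unfolding bxor_def sum3 inbs by simp
lemma bs4_2: "bsign 4 2 = -1" unfolding bsign_code sum3 prod3 inbs gsqs by simp
lemma bx4_2: "bxor 4 2 = 6" unfolding bxor_def sum3 inbs by simp
lemma bs4_3: "bsign 4 3 = 1" unfolding bsign_code sum3 prod3 inbs gsqs by simp
lemma bx4_3: "bxor 4 3 = 7" unfolding bxor_def sum3 inbs by simp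
lemma bs4_4: "bsign 4 4 = -1" unfolding bsign_code sum3 prod3 inbs gsqs by simp
lemma bx4_4: "bxor 4 4 = 0" unfolding bxor_def sum3 inbs by simp
lemma bs4_5: "bsign 4 5 = 1" unfolding bsign_code sum3 prod3 inbs gsqs by simp
lemma bx4_5: "bxor 4 5 = 1" unfolding bxor_def sum3 inbs by simp
lemma bs4_6: "bsign 4 6 = 1" unfolding bsign_code sum3 prod3 inbs gsqs by simp
lemma bx4_6: "bxor 4 6 = 2" unfolding bxor_def sum3 inbs by simp
lemma bs4_7: "bsign 4 7 = -1" unfolding bsign_code sum3 prod3 inbs gsqs by simp
lemma bx4_7: "bxor 4 7 = 3" unfolding bxor_def sum3 inbs by simp
lemma bs5_0: "bsign 5 0 = 1" unfolding bsign_code sum3 prod3 inbs gsqs by simp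
lemma bx5_0: "bxor 5 0 = 5" unfolding bxor_def sum3 inbs by simp
lemma bs5_1: "bsign 5 1 = -1" unfolding bsign_code sum3 prod3 inbs gsqs by simp
lemma bx5_1: "bxor 5 1 = 4" unfolding bxor_def sum3 inbs by simp
lemma bs5_2: "bsign 5 2 = -1" unfolding bsign_code sum3 prod3 inbs gsqs by simp
lemma bx5_2: "bxor 5 2 = 7" unfolding bxor_def sum3 inbs by simp
lemma bs5_3: "bsign 5 3 = 1" unfolding bsign_code sum3 prod3 inbs gsqs by simp
lemma bx5_3: "bxor 5 3 = 6" unfolding bxor_def sum3 inbs by simp
lemma bs5_4: "bsign 5 4 = -1" unfolding bsign_code sum3 prod3 inbs gsqs by simp
lemma bx5_4: "bxor 5 4 = 1" unfolding bxor_def sum3 inbs by simp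
lemma bs5_5: "bsign 5 5 = 1" unfolding bsign_code sum3 prod3 inbs gsqs by simp
lemma bx5_5: "bxor 5 5 = 0" unfolding bxor_def sum3 inbs by simp
lemma bs5_6: "bsign 5 6 = 1" unfolding bsign_code sum3 prod3 inbs gsqs by simp
lemma bx5_6: "bxor 5 6 = 3" unfolding bxor_def sum3 inbs by simp
lemma bs5_7: "bsign 5 7 = -1" unfolding bsign_code sum3 prod3 inbs gsqs by simp
lemma bx5_7: "bxor 5 7 = 2" unfolding bxor_def sum3 inbs by simp
lemma bs6_0: "bsign 6 0 = 1" unfolding bsign_code sum3 prod3 inbs gsqs by simp
lemma bx6_0: "bxor 6 0 = 6" unfolding bxor_def sum3 inbs by simp
lemma bs6_1: "bsign 6 1 = 1" unfolding bsign_code sum3 prod3 inbs gsqs by simp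
lemma bx6_1: "bxor 6 1 = 7" unfolding bxor_def sum3 inbs by simp
lemma bs6_2: "bsign 6 2 = 1" unfolding bsign_code sum3 prod3 inbs gsqs by simp
lemma bx6_2: "bxor 6 2 = 4" unfolding bxor_def sum3 inbs by simp
lemma bs6_3: "bsign 6 3 = 1" unfolding bsign_code sum3 prod3 inbs gsqs by simp
lemma bx6_3: "bxor 6 3 = 5" unfolding bxor_def sum3 inbs by simp
lemma bs6_4: "bsign 6 4 = -1" unfolding bsign_code sum3 prod3 inbs gsqs by simp
lemma bx6_4: "bxor 6 4 = 2" unfolding bxor_def sum3 inbs by simp
lemma bs6_5: "bsign 6 5 = -1" unfolding bsign_code sum3 prod3 inbs gsqs by simp
lemma bx6_5: "bxor 6 5 = 3" unfolding bxor_def sum3 inbs by simp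
lemma bs6_6: "bsign 6 6 = -1" unfolding bsign_code sum3 prod3 inbs gsqs by simp
lemma bx6_6: "bxor 6 6 = 0" unfolding bxor_def sum3 inbs by simp
lemma bs6_7: "bsign 6 7 = -1" unfolding bsign_code sum3 prod3 inbs gsqs by simp
lemma bx6_7: "bxor 6 7 = 1" unfolding bxor_def sum3 inbs by simp
lemma bs7_0: "bsign 7 0 = 1" unfolding bsign_code sum3 prod3 inbs gsqs by simp
lemma bx7_0: "bxor 7 0 = 7" unfolding bxor_def sum3 inbs by simp
lemma bs7_1: "bsign 7 1 = 1" unfolding bsign_code sum3 prod3 inbs gsqs by simp
lemma bx7_1: "bxor 7 1 = 6" unfolding bxor_def sum3 inbs by simp
lemma bs7_2: "bsign 7 2 = 1" unfolding bsign_code sum3 prod3 inbs gsqs by simp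
lemma bx7_2: "bxor 7 2 = 5" unfolding bxor_def sum3 inbs by simp
lemma bs7_3: "bsign 7 3 = 1" unfolding bsign_code sum3 prod3 inbs gsqs by simp
lemma bx7_3: "bxor 7 3 = 4" unfolding bxor_def sum3 inbs by simp
lemma bs7_4: "bsign 7 4 = -1" unfolding bsign_code sum3 prod3 inbs gsqs by simp
lemma bx7_4: "bxor 7 4 = 3" unfolding bxor_def sum3 inbs by simp
lemma bs7_5: "bsign 7 5 = -1" unfolding bsign_code sum3 prod3 inbs gsqs by simp
lemma bx7_5: "bxor 7 5 = 2" unfolding bxor_def sum3 inbs by simp
lemma bs7_6: "bsign 7 6 = -1" unfolding bsign_code sum3 prod3 inbs gsqs by simp
lemma bx7_6: "bxor 7 6 = 1" unfolding bxor_def sum3 inbs by simp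
lemma bs7_7: "bsign 7 7 = -1" unfolding bsign_code sum3 prod3 inbs gsqs by simp
lemma bx7_7: "bxor 7 7 = 0" unfolding bxor_def sum3 inbs by simp
lemmas tabs = bs0_0 bx0_0 bs0_1 bx0_1 bs0_2 bx0_2 bs0_3 bx0_3 bs0_4 bx0_4 bs0_5 bx0_5 bs0_6 bx0_6 bs0_7 bx0_7 bs1_0 bx1_0 bs1_1 bx1_1 bs1_2 bx1_2 bs1_3 bx1_3 bs1_4 bx1_4 bs1_5 bx1_5 bs1_6 bx1_6 bs1_7 bx1_7 bs2_0 bx2_0 bs2_1 bx2_1 bs2_2 bx2_2 bs2_3 bx2_3 bs2_4 bx2_4 bs2_5 bx2_5 bs2_6 bx2_6 bs2_7 bx2_7 bs3_0 bx3_0 bs3_1 bx3_1 bs3_2 bx3_2 bs3_3 bx3_3 bs3_4 bx3_4 bs3_5 bx3_5 bs3_6 bx3_6 bs3_7 bx3_7 bs4_0 bx4_0 bs4_1 bx4_1 bs4_2 bx4_2 bs4_3 bx4_3 bs4_4 bx4_4 bs4_5 bx4_5 bs4_6 bx4_6 bs4_7 bx4_7 bs5_0 bx5_0 bs5_1 bx5_1 bs5_2 bx5_2 bs5_3 bx5_3 bs5_4 bx5_4 bs5_5 bx5_5 bs5_6 bx5_6 bs5_7 bx5_7 bs6_0 bx6_0 bs6_1 bx6_1 bs6_2 bx6_2 bs6_3 bx6_3 bs6_4 bx6_4 bs6_5 bx6_5 bs6_6 bx6_6 bs6_7 bx6_7 bs7_0 bx7_0 bs7_1 bx7_1 bs7_2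 bx7_2 bs7_3 bx7_3 bs7_4 bx7_4 bs7_5 bx7_5 bs7_6 bx7_6 bs7_7 bx7_7
lemma sum8: "(\<Sum>t<(8::nat). f t) = f 0 + f 1 + f 2 + f 3 + f 4 + f 5 + f 6 + (f 7::real)"
  by (simp add: lessThan_nat_numeral)
lemma mul0: "clmul a b 0 = a 0 * b 0 + a 1 * b 1 - a 2 * b 2 + a 3 * b 3 - a 4 * b 4 + a 5 * b 5 - a 6 * b 6 - a 7 * b 7"
  unfolding clmul_def apply (simp only: sum8 tabs)
  by simp
lemma mul1: "clmul a b 1 = a 0 * b 1 + a 1 * b 0 + a 2 * b 3 - a 3 * b 2 + a 4 * b 5 - a 5 * b 4 - a 6 * b 7 - a 7 * b 6"
  unfolding clmul_def apply (simp only: sum8 tabs)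
  by simp
lemma mul2: "clmul a b 2 = a 0 * b 2 + a 1 * b 3 + a 2 * b 0 - a 3 * b 1 + a 4 * b 6 - a 5 * b 7 - a 6 * b 4 - a 7 * b 5"
  unfolding clmul_def apply (simp only: sum8 tabs)
  by simp
lemma mul3: "clmul a b 3 = a 0 * b 3 + a 1 * b 2 - a 2 * b 1 + a 3 * b 0 - a 4 * b 7 + a 5 * b 6 - a 6 * b 5 - a 7 * b 4"
  unfolding clmul_def apply (simp only: sum8 tabs)
  by simp
lemma mul4: "clmul a b 4 = a 0 * b 4 + a 1 * b 5 - a 2 * b 6 + a 3 * b 7 + a 4 * b 0 - a 5 * b 1 + a 6 * b 2 + a 7 * b 3"
  unfolding clmul_def apply (simp only: sum8 tabs)
  by simp
lemma mul5: "clmul a b 5 = a 0 * b 5 + a 1 * b 4 + a 2 * b 7 - a 3 * b 6 - a 4 * b 1 + a 5 * b 0 + a 6 * b 3 + a 7 * b 2"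
  unfolding clmul_def apply (simp only: sum8 tabs)
  by simp
lemma mul6: "clmul a b 6 = a 0 * b 6 + a 1 * b 7 + a 2 * b 4 - a 3 * b 5 - a 4 * b 2 + a 5 * b 3 + a 6 * b 0 + a 7 * b 1"
  unfolding clmul_def apply (simp only: sum8 tabs)
  by simp
lemma mul7: "clmul a b 7 = a 0 * b 7 + a 1 * b 6 - a 2 * b 5 + a 3 * b 4 + a 4 * b 3 - a 5 * b 2 + a 6 * b 1 + a 7 * b 0"
  unfolding clmul_def apply (simp only: sum8 tabs)
  by simp
lemma mulbig: "8 \<le> r \<Longrightarrow> clmul a b r = 0"
  unfolding clmul_def by simp

lemma mul1s: "clmul a b (Suc 0) = a 0 * b 1 + a 1 * b 0 + a 2 * b 3 - a 3 * b 2 + a 4 * b 5 - a 5 * b 4 - a 6 * b 7 - a 7 * b 6"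
  using mul1[of a b] by simp
lemmas muls = mul0 mul1s mul2 mul3 mul4 mul5 mul6 mul7

lemma ext8:
  fixes f g :: "nat \<Rightarrow> real"
  assumes "f 0 = g 0" "f 1 = g 1" "f 2 = g 2" "f 3 = g 3" "f 4 = g 4" "f 5 = g 5" "f 6 = g 6" "f 7 = g 7"
    "\<And>r. 8 \<le> r \<Longrightarrow> f r = g r"
  shows "f = g"
proof
  fix r show "f r = g r"
  proof (cases "r < 8")
    case True
    then have "r = 0 \<or> r = 1 \<or> r = 2 \<or> r = 3 \<or> r = 4 \<or> r = 5 \<or> r = 6 \<or> r = 7" by auto
    then show ?thesis using assms by auto
  next
    case False then show ?thesis using assms by simp
  qed
qed

lemma assoc: "(a \<star> b) \<star> c = a \<star> (b \<star> c)"
  by (rule ext8) (simp_all add: muls mulbig algebra_simps)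


definition one :: "nat \<Rightarrow> real" where "one = (\<lambda>r. if r = 0 then 1 else 0)"
definition sc :: "real \<Rightarrow> (nat \<Rightarrow> real) \<Rightarrow> (nat \<Rightarrow> real)" where "sc k a = (\<lambda>r. k * a r)"
definition csub :: "(nat \<Rightarrow> real) \<Rightarrow> (nat \<Rightarrow> real) \<Rightarrow> (nat \<Rightarrow> real)" where "csub a b = (\<lambda>r. a r - b r)"
definition ccj :: "(nat \<Rightarrow> real) \<Rightarrow> (nat \<Rightarrow> real)" where
  "ccj a = (\<lambda>r. (if r \<in> {1,2,3,4,5,6} then -1 else 1) * a r)"

lemma prime_mul: "clprime (a \<star> b) = clprime b \<star> clprime a"
  by (rule ext8) (simp_all add: muls mulbig clprime_def algebra_simps)

lemma prime_prime: "clprime (clprime a) = a"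
  by (rule ext) (simp add: clprime_def)

lemma ccj_mul: "ccj (a \<star> b) = ccj b \<star> ccj a"
  by (rule ext8) (simp_all add: muls mulbig ccj_def algebra_simps)

lemma ccj_prime: "ccj (clprime a) = clprime (ccj a)"
  by (rule ext) (simp add: clprime_def ccj_def)

lemma prime_sc: "clprime (sc k a) = sc k (clprime a)"
  by (rule ext) (simp add: clprime_def sc_def)

lemma sc_mul: "sc k a \<star> b = sc k (a \<star> b)"
  by (rule ext8) (simp_all add: muls mulbig sc_def algebra_simps)

lemma mul_sc: "a \<star> sc k b = sc k (a \<star> b)"
  by (rule ext8) (simp_all add: muls mulbig sc_def algebra_simps)

lemma sc_sc: "sc k (sc l a) = sc (k * l) a"
  by (rule ext) (simp add: sc_def)

lemma zero_mul: "(\<lambda>_. 0) \<star> b = (\<lambda>_. 0)"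
  by (rule ext8) (simp_all add: muls mulbig)

lemma mul_zero: "b \<star> (\<lambda>_. 0) = (\<lambda>_. 0)"
  by (rule ext8) (simp_all add: muls mulbig)

lemma prime_zero: "clprime (\<lambda>_. 0) = (\<lambda>_. 0)"
  by (rule ext) (simp add: clprime_def)

lemma delta_comm: "a \<star> ccj a = ccj a \<star> a"
  by (rule ext8) (simp_all add: muls mulbig ccj_def algebra_simps)

lemma delta_van: "(a \<star> ccj a) 1 = 0" "(a \<star> ccj a) 2 = 0" "(a \<star> ccj a) 3 = 0"
   "(a \<star> ccj a) 4 = 0" "(a \<star> ccj a) 5 = 0" "(a \<star> ccj a) 6 = 0"
  by (simp_all add: muls ccj_def algebra_simps)

lemma central:
  assumes "z 1 = 0" "z 2 = 0" "z 3 = 0" "z 4 = 0" "z 5 = 0" "z 6 = 0"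
  shows "z \<star> b = b \<star> z"
  using assms by (intro ext8) (simp_all add: muls mulbig algebra_simps)

lemma cl12_mul: "a \<star> b \<in> cl12"
  by (simp add: cl12_def mulbig)

lemma one_mul: "a \<in> cl12 \<Longrightarrow> one \<star> a = a"
  by (rule ext8) (simp_all add: muls mulbig one_def cl12_def)

lemma mul_one: "a \<in> cl12 \<Longrightarrow> a \<star> one = a"
  by (rule ext8) (simp_all add: muls mulbig one_def cl12_def)

lemma prime_one: "clprime one = one"
  by (rule ext) (simp add: clprime_def one_def)

lemma key: "a \<in> cl12 \<Longrightarrow> a \<star> clprime a \<star> a =
   csub (sc (2 * (clprime a \<star> a) 0) a) ((a \<star> ccj a) \<star> ccj (clprime a))"
  by (rule ext8) (simp_all add: muls mulbig cl12_def sc_def csub_def ccj_def clprime_def algebra_simps)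

lemma sumsq: "(clprime a \<star> a) 0 = a 0 ^ 2 + a 1 ^ 2 + a 2 ^ 2 + a 3 ^ 2 + a 4 ^ 2 + a 5 ^ 2 + a 6 ^ 2 + a 7 ^ 2"
  by (simp add: muls clprime_def power2_eq_square)


lemma cl12_sc: "a \<in> cl12 \<Longrightarrow> sc k a \<in> cl12"
  by (simp add: cl12_def sc_def)

lemma cl12_prime: "a \<in> cl12 \<Longrightarrow> clprime a \<in> cl12"
  by (simp add: cl12_def clprime_def)

lemma uniq:
  assumes x1: "a \<star> x \<star> a = a" and x2: "x \<star> a \<star> x = x" and x3: "clprime (a \<star> x) = a \<star> x"
    and x4: "clprime (x \<star> a) = x \<star> a"
    and y1: "a \<star> y \<star> a = a" and y2: "y \<star> a \<star> y = y" and y3: "clprime (a \<star> y) = a \<star> y"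
    and y4: "clprime (y \<star> a) = y \<star> a"
  shows "x = y"
proof -
  let ?p = clprime
  have pa1: "?p a = ?p a \<star> (?p y \<star> ?p a)"
    using arg_cong[OF y1, of clprime] by (simp add: prime_mul assoc)
  have pa2: "?p a = ?p a \<star> (?p x \<star> ?p a)"
    using arg_cong[OF x1, of clprime] by (simp add: prime_mul assoc)
  have "x = x \<star> (a \<star> x)" using x2 by (simp add: assoc)
  also have "\<dots> = x \<star> ?p (a \<star> x)" using x3 by simp
  also have "\<dots> = x \<star> (?p x \<star> ?p a)" by (simp add: prime_mul)
  also have "\<dots> = x \<star> (?p x \<star> (?p a \<star> (?p y \<star> ?p a)))" using pa1 by simp
  also have "\<dots> = x \<star> ((?p x \<star> ?p a) \<star> (?p y \<star> ?p a))" by (simp add: assoc)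
  also have "\<dots> = x \<star> (?p (a \<star> x) \<star> ?p (a \<star> y))" by (simp add: prime_mul)
  also have "\<dots> = x \<star> ((a \<star> x) \<star> (a \<star> y))" using x3 y3 by simp
  also have "\<dots> = (x \<star> a \<star> x) \<star> a \<star> y" by (simp add: assoc)
  also have "\<dots> = x \<star> a \<star> y" using x2 by simp
  finally have ex: "x = x \<star> a \<star> y" .
  have "y = (y \<star> a) \<star> y" using y2 by simp
  also have "\<dots> = ?p (y \<star> a) \<star> y" using y4 by simp
  also have "\<dots> = (?p a \<star> ?p y) \<star> y" by (simp add: prime_mul)
  also have "\<dots> = ((?p a \<star> (?p x \<star> ?p a)) \<star> ?p y) \<star> y" using pa2 by simp
  also have "\<dots> = ((?p a \<star> ?p x) \<star> (?p a \<star> ?p y)) \<star> y" by (simp add: assoc)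
  also have "\<dots> = (?p (x \<star> a) \<star> ?p (y \<star> a)) \<star> y" by (simp add: prime_mul)
  also have "\<dots> = ((x \<star> a) \<star> (y \<star> a)) \<star> y" using x4 y4 by simp
  also have "\<dots> = x \<star> a \<star> (y \<star> a \<star> y)" by (simp add: assoc)
  also have "\<dots> = x \<star> a \<star> y" using y2 by simp
  finally have ey: "y = x \<star> a \<star> y" .
  show ?thesis using ex ey by simp
qed

lemma exist_inv:
  assumes a: "a \<in> cl12" and nz: "(a \<star> ccj a) 0 ^ 2 + (a \<star> ccj a) 7 ^ 2 \<noteq> 0"
  shows "\<exists>x. x \<in> cl12 \<and> a \<star> x \<star> a = a \<and> x \<star> a \<star> x = x
           \<and> clprime (a \<star> x) = a \<star> x \<and> clprime (x \<star> a) = x \<star> a"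
proof -
  define d where "d = a \<star> ccj a"
  define n where "n = d 0 ^ 2 + d 7 ^ 2"
  define z :: "nat \<Rightarrow> real" where "z = (\<lambda>r. if r = 0 then d 0 / n else if r = 7 then - d 7 / n else 0)"
  have n: "n \<noteq> 0" using nz by (simp add: n_def d_def)
  have dv: "d 1 = 0" "d 2 = 0" "d 3 = 0" "d 4 = 0" "d 5 = 0" "d 6 = 0"
    unfolding d_def by (rule delta_van)+
  have dv1: "d (Suc 0) = 0" using dv(1) by simp
  have n2: "d 0 * d 0 + d 7 * d 7 \<noteq> 0" using n by (simp add: n_def power2_eq_square)
  have zv: "z 1 = 0" "z 2 = 0" "z 3 = 0" "z 4 = 0" "z 5 = 0" "z 6 = 0" by (simp_all add: z_def)
  have c0: "d 0 * (d 0 / n) + d 7 * (d 7 / n) = 1" using n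
    by (simp add: n_def power2_eq_square add_divide_distrib[symmetric])
  have dz: "d \<star> z = one"
  proof (rule ext8)
    show "(d \<star> z) 0 = one 0" unfolding mul0 using c0 by (simp add: dv z_def one_def)
  qed (simp_all add: muls mulbig dv dv1 z_def one_def)
  define x where "x = ccj a \<star> z"
  have ax: "a \<star> x = one" unfolding x_def by (simp add: assoc[symmetric] d_def[symmetric] dz)
  have xa: "x \<star> a = one"
  proof -
    have "x \<star> a = ccj a \<star> (z \<star> a)" unfolding x_def by (simp add: assoc)
    also have "\<dots> = ccj a \<star> (a \<star> z)" using central[OF zv] by simp
    also have "\<dots> = d \<star> z" by (simp add: assoc[symmetric] d_def delta_comm)
    finally show ?thesis using dz by simp
  qed
  have xc: "x \<in> cl12" unfolding x_def by (rule cl12_mul)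
  show ?thesis using ax xa a xc by (intro exI[of _ x]) (simp add: one_mul mul_one prime_one)
qed

lemma exist_sing:
  assumes a: "a \<in> cl12" and z: "a \<star> ccj a = (\<lambda>_. 0)" and anz: "a \<noteq> (\<lambda>_. 0)"
  shows "\<exists>x. x \<in> cl12 \<and> a \<star> x \<star> a = a \<and> x \<star> a \<star> x = x
           \<and> clprime (a \<star> x) = a \<star> x \<and> clprime (x \<star> a) = x \<star> a"
proof -
  define s where "s = (clprime a \<star> a) 0"
  have s8: "s = (\<Sum>t<(8::nat). a t ^ 2)" unfolding s_def sum8 sumsq ..
  have spos: "s > 0"
  proof -
    obtain r where r: "a r \<noteq> 0" using anz by auto
    have r8: "r < 8"
    proof (rule ccontr)
      assume "\<not> r < 8"
      then have "a r = 0" using a unfolding cl12_def by simp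
      with r show False by simp
    qed
    have "a r ^ 2 \<le> (\<Sum>t<(8::nat). a t ^ 2)"
      by (rule member_le_sum) (use r8 in auto)
    moreover have "a r ^ 2 > 0" using r by simp
    ultimately show ?thesis unfolding s8 by linarith
  qed
  have k: "a \<star> clprime a \<star> a = sc (2 * s) a"
    unfolding key[OF a] z zero_mul s_def by (rule ext) (simp add: csub_def sc_def)
  define x where "x = sc (1 / (2 * s)) (clprime a)"
  have 1: "a \<star> x \<star> a = a"
    unfolding x_def using spos by (simp add: sc_mul mul_sc k sc_sc) (simp add: sc_def)
  have 2: "x \<star> a \<star> x = x"
  proof -
    have "clprime a \<star> a \<star> clprime a = clprime (a \<star> clprime a \<star> a)"
      by (simp add: prime_mul prime_prime assoc)
    also have "\<dots> = sc (2 * s) (clprime a)" by (simp add: k prime_sc)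
    finally have e: "clprime a \<star> a \<star> clprime a = sc (2 * s) (clprime a)" .
    show ?thesis unfolding x_def using spos
      by (simp add: sc_mul mul_sc e sc_sc)
  qed
  have 3: "clprime (a \<star> x) = a \<star> x"
    unfolding x_def by (simp add: mul_sc prime_sc prime_mul prime_prime)
  have 4: "clprime (x \<star> a) = x \<star> a"
    unfolding x_def by (simp add: sc_mul prime_sc prime_mul prime_prime)
  show ?thesis using 1 2 3 4 by (intro exI[of _ x]) (simp add: x_def cl12_sc cl12_prime a)
qed

theorem lemma3p1:
  assumes "a \<in> cl12"
  shows "\<exists>!x. x \<in> cl12 \<and> a \<star> x \<star> a = a \<and> x \<star> a \<star> x = x
           \<and> clprime (a \<star> x) = a \<star> x \<and> clprime (x \<star> a) = x \<star> a"
proof (rule ex_ex1I)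
  show "\<exists>x. x \<in> cl12 \<and> a \<star> x \<star> a = a \<and> x \<star> a \<star> x = x
           \<and> clprime (a \<star> x) = a \<star> x \<and> clprime (x \<star> a) = x \<star> a"
  proof (cases "(a \<star> ccj a) 0 ^ 2 + (a \<star> ccj a) 7 ^ 2 = 0")
    case False
    then show ?thesis using exist_inv[OF assms] by blast
  next
    case True
    then have d0: "(a \<star> ccj a) 0 = 0" "(a \<star> ccj a) 7 = 0"
      by (simp_all add: sum_power2_eq_zero_iff)
    have d: "a \<star> ccj a = (\<lambda>_. 0)"
      by (rule ext8) (simp_all add: d0 delta_van mulbig delta_van(1)[simplified])
    show ?thesis
    proof (cases "a = (\<lambda>_. 0)")
      case True
      then show ?thesis
        by (intro exI[of _ "\<lambda>_. 0"]) (simp add: zero_mul mul_zero prime_zero cl12_def)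
    next
      case False
      then show ?thesis using exist_sing[OF assms d] by blast
    qed
  qed
next
  fix x y
  assume "x \<in> cl12 \<and> a \<star> x \<star> a = a \<and> x \<star> a \<star> x = x \<and> clprime (a \<star> x) = a \<star> x \<and> clprime (x \<star> a) = x \<star> a"
    and "y \<in> cl12 \<and> a \<star> y \<star> a = a \<and> y \<star> a \<star> y = y \<and> clprime (a \<star> y) = a \<star> y \<and> clprime (y \<star> a) = y \<star> a"
  then show "x = y" using uniq by blast
qed

end
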